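(* Let $N\ge1$, $q\in\mathbb{C}$ with $0<|q|<1$, $j\in\{1,\dots,N\}$, $s,w_2\in\mathbb{C}$, and let $C$ be a simple closed contour in the $w_1$-plane encircling $w_1=0$, $s$, $\sqrt{-1}$, $qw_2$, $qw_2^{-1}$ but not $s^{-1}$, $-\sqrt{-1}$, $q^{-1}w_2$, $q^{-1}w_2^{-1}$. With $H^{2j}(w_1,w_2)$ as in the context, the following operator identities hold: (5) $\oint_C\frac{dw_1}{w_1}(1-sw_1)\Big(1-\frac{q}{w_1w_2}\Big)\frac{1-w_1^2}{1+w_1^2}H^{2j}(w_1,w_2)=-\frac{q}{2w_2}\Big(1-\frac{sw_2}{q}\Big)\oint_C\frac{dw_1}{w_1}\frac{(1-w_1^2)^2}{w_1(1+w_1^2)}H^{2j}(w_1,w_2)$; (6) $\oint_C\frac{dw_1}{w_1}w_1\Big(1-\frac{q}{w_1w_2}\Big)\frac{1-w_1^2}{1+w_1^2}H^{2j}(w_1,w_2)=-\frac12\oint_C\frac{dw_1}{w_1}\frac{(1-w_1^2)^2}{w_1(1+w_1^2)}H^{2j}(w_1,w_2)$; (7) $\oint_C\frac{dw_1}{w_1}\frac{1-\frac{q}{w_1w_2}}{1-s/w_1}\frac{1-w_1^2}{1+w_1^2}H^{2j}(w_1,w_2)=-\frac{q}{2w_2}\Big(1-\frac{sw_2}{q}\Big)\oint_C\frac{dw_1}{w_1}\frac{(1-w_1^2)^2}{w_1(1+w_1^2)}\frac{H^{2j}(w_1,w_2)}{(1-sw_1)(1-s/w_1)}$. Moreover, the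 integral $\oint_C\frac{dw_1}{w_1}\frac{(1-w_1^2)^2}{w_1(1+w_1^2)}H^{2j}(w_1,w_2)$ is invariant under $w_2\to w_2^{-1}$.
   Context: $[n]_q=\frac{q^n-q^{-n}}{q-q^{-1}}$. Bosons $a^i_m$ ($1\le i\le 2N$, $m\in\mathbb{Z}$) and $c^j_m$ ($1\le j\le N$) satisfy $[a^i_m,a^k_n]=(-1)^{i+1}\delta_{i,k}\delta_{m+n,0}\frac{[m]_q^2}{m}$, $[c^j_m,c^l_n]=\delta_{j,l}\delta_{m+n,0}\frac{[m]_q^2}{m}$ ($m\ne0$), other commutators zero. Set $A^i_m=(-1)^{i+1}(a^i_m+a^{i+1}_m)$ ($1\le i\le 2N-1$), $A^i_+(z)=-\sum_{m\ge1}\frac{A^i_m}{[m]_q}q^{m/2}z^{-m}$, $c^j_+(z)=-\sum_{m\ge1}\frac{c^j_m}{[m]_q}z^{-m}$, and $D(z,w)=(1-qzw)(1-qw/z)(1-qz/w)(1-q/(zw))$. Define $$H^{2j}(w_1,w_2)=\frac{\exp\big(-A^{2j}_+(qw_1)-A^{2j}_+(q/w_1)+c^j_+(qw_1)+c^j_+(q/w_1)\big)}{D(w_1,w_2)},$$ where for $j=N$ the index $2N$ of $A^{2N}_+$ is understood via $A^{2N}_m=\frac{q^m+q^{-m}}{2}\sum_{l=1}^{2N}(-1)^{l+1}a^l_m$. The exponentials involve only modes with $m>0$, so on any vector of the bosonic Fock space their matrix elements are Laurent polynomials in $w_1$; the integrals are understood in this sense. *)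

theory Defs
  imports "HOL-Complex_Analysis.Complex_Analysis"
begin

text \<open>A boson species is either
  a^i (constructor Ab i, 1 <= i <= 2N) or c^j (constructor Cb j, 1 <= j <= N).
  The Fock space is realised as the polynomial ring in the creation modes
  x_(b,m) (standing for b_(-m), m >= 1): a vector is a finitely supported
  coefficient function on monomials (finitely supported exponent functions).
  The annihilation mode b_m (m >= 1) acts as kappa_b(m) times the partial
  derivative in x_(b,m), where kappa_b(m) = [b_m, b_(-m)].\<close>

datatype boson = Ab nat | Cb nat

type_synonym fvar = "boson \<times> nat"
type_synonym monom = "fvar \<Rightarrow> nat"
type_synonym fock = "monom \<Rightarrow> complex"

definition qnum :: "complex \<Rightarrow> nat \<Rightarrow> complex" where
  "qnum q m = (q ^ m - inverse q ^ m) / (q - inverse q)"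

definition kappa :: "complex \<Rightarrow> fvar \<Rightarrow> complex" where
  "kappa q x = (case x of
      (Ab i, m) \<Rightarrow> (-1) ^ (i + 1) * qnum q m ^ 2 / of_nat m
    | (Cb j, m) \<Rightarrow> qnum q m ^ 2 / of_nat m)"

definition valid_var :: "nat \<Rightarrow> fvar \<Rightarrow> bool" where
  "valid_var N x = (case x of
      (Ab i, m) \<Rightarrow> 1 \<le> i \<and> i \<le> 2 * N \<and> 1 \<le> m
    | (Cb j, m) \<Rightarrow> 1 \<le> j \<and> j \<le> N \<and> 1 \<le> m)"

definition fock_vec :: "nat \<Rightarrow> fock \<Rightarrow> bool" where
  "fock_vec N v \<longleftrightarrow> finite {\<mu>. v \<mu> \<noteq> 0} \<and>
     (\<forall>\<mu>. v \<mu> \<noteq> 0 \<longrightarrow> finite {x. \<mu> x \<noteq> 0} \<and> (\<forall>x. \<mu> x \<noteq> 0 \<longrightarrow> valid_var N x))"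

definition fvars :: "fock \<Rightarrow> fvar set" where
  "fvars v = {x. \<exists>\<mu>. v \<mu> \<noteq> 0 \<and> \<mu> x \<noteq> 0}"

text \<open>The operator sum over x of beta(x) * b_x (annihilation modes) acting on v.\<close>
definition lin_ann :: "complex \<Rightarrow> (fvar \<Rightarrow> complex) \<Rightarrow> fock \<Rightarrow> fock" where
  "lin_ann q \<beta> v = (\<lambda>\<nu>. \<Sum>x\<in>fvars v.
       \<beta> x * kappa q x * of_nat (Suc (\<nu> x)) * v (\<nu>(x := Suc (\<nu> x))))"

text \<open>Exponential series of that operator applied to v (terminating on Fock vectors).\<close>
definition op_exp :: "complex \<Rightarrow> (fvar \<Rightarrow> complex) \<Rightarrow> fock \<Rightarrow> fock" where
  "op_exp q \<beta> v = (\<lambda>\<nu>. \<Sum>n. (((lin_ann q \<beta>) ^^ n) v \<nu>) / fact n)"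

text \<open>Coefficients of the exponent
  -A^(2j)_+(q w) - A^(2j)_+(q/w) + c^j_+(q w) + c^j_+(q/w)
  in terms of the annihilation modes a^l_m, c^l_m (m >= 1); qh is a chosen
  square root of q, used for q^(m/2).\<close>
definition Zfac :: "complex \<Rightarrow> complex \<Rightarrow> nat \<Rightarrow> complex" where
  "Zfac q w m = inverse (q * w) ^ m + inverse (q / w) ^ m"

definition Acoef :: "nat \<Rightarrow> nat \<Rightarrow> complex \<Rightarrow> nat \<Rightarrow> nat \<Rightarrow> complex" where
  "Acoef N j q l m =
     (if j < N then (if l = 2 * j \<or> l = 2 * j + 1 then -1 else 0)
      else (if 1 \<le> l \<and> l \<le> 2 * N
            then (q ^ m + inverse q ^ m) / 2 * (-1) ^ (l + 1) else 0))"

definition betaH :: "nat \<Rightarrow> nat \<Rightarrow> complex \<Rightarrow> complex \<Rightarrow> complex \<Rightarrow> fvar \<Rightarrow> complex" where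
  "betaH N j q qh w x = (case x of
      (Ab l, m) \<Rightarrow> (if 1 \<le> m then qh ^ m / qnum q m * Zfac q w m * Acoef N j q l m else 0)
    | (Cb l, m) \<Rightarrow> (if l = j \<and> 1 \<le> m then - Zfac q w m / qnum q m else 0))"

definition Dfun :: "complex \<Rightarrow> complex \<Rightarrow> complex \<Rightarrow> complex" where
  "Dfun q z w = (1 - q * z * w) * (1 - q * w / z) * (1 - q * z / w) * (1 - q / (z * w))"

text \<open>Matrix element (component at monomial nu) of H^(2j)(w1,w2) applied to v.\<close>
definition Hc :: "nat \<Rightarrow> nat \<Rightarrow> complex \<Rightarrow> complex \<Rightarrow> fock \<Rightarrow> monom \<Rightarrow> complex \<Rightarrow> complex \<Rightarrow> complex" where
  "Hc N j q qh v \<nu> w1 w2 = op_exp q (betaH N j q qh w1) v \<nu> / Dfun q w1 w2"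

end

theory Submission
  imports Defs
begin


definition la :: "complex \<Rightarrow> fvar set \<Rightarrow> (fvar \<Rightarrow> complex) \<Rightarrow> fock \<Rightarrow> fock" where
  "la q S \<beta> u = (\<lambda>\<nu>. \<Sum>x\<in>S. \<beta> x * kappa q x * of_nat (Suc (\<nu> x)) * u (\<nu>(x := Suc (\<nu> x))))"

lemma notin_fvars: "x \<notin> fvars u \<Longrightarrow> u (\<nu>(x := Suc (\<nu> x))) = 0"
  unfolding fvars_def by (metis (mono_tags, lifting) fun_upd_same mem_Collect_eq nat.distinct(1))

lemma lin_ann_la: assumes "finite S" "fvars u \<subseteq> S" shows "lin_ann q \<beta> u = la q S \<beta> u"
  unfolding lin_ann_def la_def
  by (rule ext, rule sum.mono_neutral_left[OF assms(1) assms(2)]) (auto simp: notin_fvars)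

lemma fvars_la: "fvars (la q S \<beta> u) \<subseteq> fvars u"
proof
  fix y assume "y \<in> fvars (la q S \<beta> u)"
  then obtain \<nu> where nz: "la q S \<beta> u \<nu> \<noteq> 0" and y: "\<nu> y \<noteq> 0" unfolding fvars_def by auto
  then obtain x where "u (\<nu>(x := Suc (\<nu> x))) \<noteq> 0" unfolding la_def
    by (metis (no_types, lifting) mult_zero_right sum.neutral)
  moreover have "(\<nu>(x := Suc (\<nu> x))) y \<noteq> 0" using y by auto
  ultimately show "y \<in> fvars u" unfolding fvars_def by blast
qed

lemma iter_la: assumes "finite S" "fvars u \<subseteq> S"
  shows "(lin_ann q \<beta> ^^ n) u = (la q S \<beta> ^^ n) u \<and> fvars ((la q S \<beta> ^^ n) u) \<subseteq> S"
proof (induction n)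
  case 0 then show ?case using assms by simp
next
  case (Suc n)
  then show ?case using lin_ann_la[OF assms(1)] fvars_la[of q S \<beta> "(la q S \<beta> ^^ n) u"] by auto
qed

definition dg :: "fvar set \<Rightarrow> monom \<Rightarrow> nat" where "dg S \<mu> = (\<Sum>x\<in>S. \<mu> x)"

lemma dg_upd: assumes "finite S" "x \<in> S" shows "dg S (\<nu>(x := Suc (\<nu> x))) = dg S \<nu> + 1"
proof -
  have "dg S (\<nu>(x := Suc (\<nu> x))) = Suc (\<nu> x) + (\<Sum>y\<in>S-{x}. \<nu> y)"
    unfolding dg_def using assms by (simp add: sum.remove)
  also have "\<dots> = dg S \<nu> + 1" unfolding dg_def using assms by (simp add: sum.remove)
  finally show ?thesis .
qed

lemma la_support: assumes "finite S"
  shows "(la q S \<beta> ^^ n) u \<nu> \<noteq> 0 \<Longrightarrow> \<exists>\<mu>. u \<mu> \<noteq> 0 \<and> dg S \<mu> = dg S \<nu> + n"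
proof (induction n arbitrary: \<nu>)
  case 0 then show ?case by auto
next
  case (Suc n)
  then have "la q S \<beta> ((la q S \<beta> ^^ n) u) \<nu> \<noteq> 0" by simp
  then obtain x where x: "x \<in> S" "(la q S \<beta> ^^ n) u (\<nu>(x := Suc (\<nu> x))) \<noteq> 0" unfolding la_def
    by (metis (no_types, lifting) mult_zero_right sum.neutral)
  from Suc.IH[OF x(2)] obtain \<mu> where "u \<mu> \<noteq> 0" "dg S \<mu> = dg S (\<nu>(x := Suc (\<nu> x))) + n" by blast
  then show ?case using dg_upd[OF assms x(1)] by auto
qed

lemma fvars_finite: assumes "fock_vec N v" shows "finite (fvars v)"
proof -
  have "fvars v = (\<Union>\<mu>\<in>{\<mu>. v \<mu> \<noteq> 0}. {x. \<mu> x \<noteq> 0})" unfolding fvars_def by auto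
  then show ?thesis using assms unfolding fock_vec_def by auto
qed

lemma op_exp_finite:
  assumes "fock_vec N v"
  obtains K where "\<And>\<beta> \<nu>. op_exp q \<beta> v \<nu> = (\<Sum>n<K. (la q (fvars v) \<beta> ^^ n) v \<nu> / fact n)"
proof -
  define S where "S = fvars v"
  have fS: "finite S" using fvars_finite[OF assms] S_def by simp
  have fv: "finite {\<mu>. v \<mu> \<noteq> 0}" using assms unfolding fock_vec_def by auto
  define K where "K = Suc (Max (insert 0 (dg S ` {\<mu>. v \<mu> \<noteq> 0})))"
  have zero: "(la q S \<beta> ^^ n) v \<nu> = 0" if "n \<ge> K" for n \<beta> \<nu>
  proof (rule ccontr)
    assume "(la q S \<beta> ^^ n) v \<nu> \<noteq> 0"
    then obtain \<mu> where "v \<mu> \<noteq> 0" "dg S \<mu> = dg S \<nu> + n" using la_support[OF fS] by blast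
    moreover have "dg S \<mu> \<le> Max (insert 0 (dg S ` {\<mu>. v \<mu> \<noteq> 0}))"
      using fv \<open>v \<mu> \<noteq> 0\<close> by (intro Max_ge) auto
    ultimately show False using that K_def by auto
  qed
  show ?thesis
  proof (rule that)
    fix \<beta> \<nu>
    have "op_exp q \<beta> v \<nu> = (\<Sum>n. (la q S \<beta> ^^ n) v \<nu> / fact n)"
      unfolding op_exp_def using iter_la[OF fS] S_def by simp
    also have "\<dots> = (\<Sum>n<K. (la q S \<beta> ^^ n) v \<nu> / fact n)"
      by (rule suminf_finite) (auto simp: zero)
    finally show "op_exp q \<beta> v \<nu> = (\<Sum>n<K. (la q (fvars v) \<beta> ^^ n) v \<nu> / fact n)" using S_def by simp
  qed
qed



lemma Zfac_holo: "q \<noteq> 0 \<Longrightarrow> (\<lambda>w. Zfac q w m) holomorphic_on -{0}"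
  unfolding Zfac_def by (intro holomorphic_intros) auto

lemma betaH_holo: assumes "q \<noteq> 0" shows "(\<lambda>w. betaH N j q qh w x) holomorphic_on -{0}"
proof (cases x)
  case (Pair b m)
  show ?thesis
  proof (cases b)
    case (Ab l) then show ?thesis using Pair Zfac_holo[OF assms, of m]
      by (cases "1 \<le> m") (auto simp: betaH_def intro!: holomorphic_intros)
  next
    case (Cb l) then show ?thesis using Pair Zfac_holo[OF assms, of m]
      by (cases "l = j \<and> 1 \<le> m") (auto simp: betaH_def intro!: holomorphic_intros)
  qed
qed

lemma la_apply: "la q S \<beta> u \<nu> = (\<Sum>x\<in>S. \<beta> x * kappa q x * of_nat (Suc (\<nu> x)) * u (\<nu>(x := Suc (\<nu> x))))"
  unfolding la_def ..

definition Tn where "Tn q S \<beta> n v = (la q S \<beta> ^^ n) v"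

lemma Tn_Suc: "Tn q S \<beta> (Suc n) v \<nu> = (\<Sum>x\<in>S. \<beta> x * kappa q x * of_nat (Suc (\<nu> x)) * Tn q S \<beta> n v (\<nu>(x := Suc (\<nu> x))))"
  unfolding Tn_def by (simp add: la_apply)

lemma T_holo: assumes "q \<noteq> 0"
  shows "(\<lambda>w. (la q S (betaH N j q qh w) ^^ n) v \<nu>) holomorphic_on -{0}"
proof -
  have "(\<lambda>w. Tn q S (betaH N j q qh w) n v \<nu>) holomorphic_on -{0}"
  proof (induction n arbitrary: \<nu>)
    case 0 then show ?case by (simp add: Tn_def)
  next
    case (Suc n)
    show ?case unfolding Tn_Suc
      by (intro holomorphic_intros betaH_holo[OF assms] Suc.IH)
  qed
  then show ?thesis unfolding Tn_def .
qed

lemma opexp_holo: assumes "fock_vec N' v" "q \<noteq> 0"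
  shows "(\<lambda>w. op_exp q (betaH N j q qh w) v \<nu>) holomorphic_on -{0}"
proof -
  obtain K where K: "\<And>\<beta> \<nu>. op_exp q \<beta> v \<nu> = (\<Sum>n<K. (la q (fvars v) \<beta> ^^ n) v \<nu> / fact n)"
    using op_exp_finite[OF assms(1)] by blast
  show ?thesis unfolding K by (intro holomorphic_intros T_holo[OF assms(2)]) auto
qed

lemma Zfac_inv: "Zfac q (inverse w) m = Zfac q w m"
  unfolding Zfac_def by (simp add: divide_inverse add.commute)

lemma betaH_inv: "betaH N j q qh (inverse w) = betaH N j q qh w"
  unfolding betaH_def Zfac_inv ..

lemma Dfun_inv1: "Dfun q (inverse z) w = Dfun q z w"
  unfolding Dfun_def by (cases "z = 0"; cases "w = 0") (simp_all add: field_simps)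

lemma Dfun_inv2: "Dfun q z (inverse w) = Dfun q z w"
  unfolding Dfun_def by (cases "z = 0"; cases "w = 0") (simp_all add: field_simps)

lemma Hc_inv1: "Hc N j q qh v \<nu> (inverse w1) w2 = Hc N j q qh v \<nu> w1 w2"
  unfolding Hc_def betaH_inv Dfun_inv1 ..

lemma Hc_inv2: "Hc N j q qh v \<nu> w1 (inverse w2) = Hc N j q qh v \<nu> w1 w2"
  unfolding Hc_def Dfun_inv2 ..



lemma deriv_inverse_c: "(z::complex) \<noteq> 0 \<Longrightarrow> deriv inverse z = - (inverse z ^ 2)"
  by (rule DERIV_imp_deriv) (auto intro!: derivative_eq_intros simp: power2_eq_square)

lemma inverse_analytic: "(inverse :: complex \<Rightarrow> complex) analytic_on -{0}"
  by (intro analytic_intros) auto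

lemma inv_comp_integral:
  assumes "valid_path \<gamma>" "0 \<notin> path_image \<gamma>"
  shows "contour_integral (inverse \<circ> \<gamma>) f = - contour_integral \<gamma> (\<lambda>u. f (inverse u) / u^2)"
proof -
  have "contour_integral (inverse \<circ> \<gamma>) f = contour_integral \<gamma> (\<lambda>w. deriv inverse w * f (inverse w))"
    using assms by (intro contour_integral_comp_analyticW[OF inverse_analytic]) auto
  also have "\<dots> = contour_integral \<gamma> (\<lambda>u. - (f (inverse u) / u^2))"
  proof (intro contour_integral_cong refl)
    fix x assume "x \<in> path_image \<gamma>"
    then have "x \<noteq> 0" using assms by auto
    then show "deriv inverse x * f (inverse x) = - (f (inverse x) / x^2)"
      by (simp add: deriv_inverse_c divide_inverse power_inverse)
  qed
  finally show ?thesis by (simp add: contour_integral_neg)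
qed

lemma inv_path:
  fixes \<gamma> :: "real \<Rightarrow> complex"
  assumes "valid_path \<gamma>" "0 \<notin> path_image \<gamma>"
  shows "valid_path (inverse \<circ> \<gamma>)" "path_image (inverse \<circ> \<gamma>) = inverse ` path_image \<gamma>"
proof -
  show "valid_path (inverse \<circ> \<gamma>)"
    by (rule valid_path_compose_analytic[OF assms(1) inverse_analytic]) (use assms in auto)
  show "path_image (inverse \<circ> \<gamma>) = inverse ` path_image \<gamma>" by (simp add: path_image_compose)
qed

lemma inv_wind:
  assumes "valid_path \<gamma>" "0 \<notin> path_image \<gamma>" "p \<noteq> 0" "inverse p \<notin> path_image \<gamma>"
  shows "winding_number (inverse \<circ> \<gamma>) p = winding_number \<gamma> (inverse p) - winding_number \<gamma> 0"
proof -
  have pn: "p \<notin> path_image (inverse \<circ> \<gamma>)" using inv_path[OF assms(1,2)] assms(4) by auto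
  have "winding_number (inverse \<circ> \<gamma>) p = 1/(2*pi*\<i>) * contour_integral (inverse \<circ> \<gamma>) (\<lambda>w. 1/(w - p))"
    by (rule winding_number_valid_path[OF inv_path(1)[OF assms(1,2)] pn])
  also have "contour_integral (inverse \<circ> \<gamma>) (\<lambda>w. 1/(w - p)) = - contour_integral \<gamma> (\<lambda>u. 1/(inverse u - p) / u^2)"
    by (rule inv_comp_integral[OF assms(1,2)])
  also have "contour_integral \<gamma> (\<lambda>u. 1/(inverse u - p) / u^2) = contour_integral \<gamma> (\<lambda>u. 1/(u - 0) - 1/(u - inverse p))"
  proof (intro contour_integral_cong refl)
    fix u assume u: "u \<in> path_image \<gamma>"
    then have "u \<noteq> 0" "u \<noteq> inverse p" using assms by auto
    then have "1 - p * u \<noteq> 0" using assms(3) by (metis divide_eq_1_iff divide_inverse inverse_eq_divide mult.commute right_minus_eq)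
    then show "1/(inverse u - p) / u^2 = 1/(u - 0) - 1/(u - inverse p)"
      using \<open>u \<noteq> 0\<close> \<open>u \<noteq> inverse p\<close> assms(3) by (simp add: field_simps power2_eq_square)
  qed
  also have "\<dots> = contour_integral \<gamma> (\<lambda>u. 1/(u - 0)) - contour_integral \<gamma> (\<lambda>u. 1/(u - inverse p))"
    using assms by (intro contour_integral_diff contour_integrable_inversediff) auto
  finally have calc: "winding_number (inverse \<circ> \<gamma>) p = 1 / (2 * pi * \<i>) * - (contour_integral \<gamma> (\<lambda>u. 1/(u - 0)) - contour_integral \<gamma> (\<lambda>u. 1/(u - inverse p)))" .
  have W0: "winding_number \<gamma> 0 = 1/(2*pi*\<i>) * contour_integral \<gamma> (\<lambda>u. 1/(u - 0))"
    by (rule winding_number_valid_path[OF assms(1,2)])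
  have Wp: "winding_number \<gamma> (inverse p) = 1/(2*pi*\<i>) * contour_integral \<gamma> (\<lambda>u. 1/(u - inverse p))"
    by (rule winding_number_valid_path[OF assms(1,4)])
  show ?thesis by (simp only: calc W0 Wp) (simp add: algebra_simps)
qed

lemma inv_wind0:
  assumes "valid_path \<gamma>" "0 \<notin> path_image \<gamma>"
  shows "winding_number (inverse \<circ> \<gamma>) 0 = - winding_number \<gamma> 0"
proof -
  have pn: "0 \<notin> path_image (inverse \<circ> \<gamma>)" using inv_path[OF assms(1,2)] assms(2) by auto
  have "winding_number (inverse \<circ> \<gamma>) 0 = 1/(2*pi*\<i>) * contour_integral (inverse \<circ> \<gamma>) (\<lambda>w. 1/(w - 0))"
    by (rule winding_number_valid_path[OF inv_path(1)[OF assms(1,2)] pn])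
  also have "contour_integral (inverse \<circ> \<gamma>) (\<lambda>w. 1/(w - 0)) = - contour_integral \<gamma> (\<lambda>u. 1/(inverse u - 0) / u^2)"
    by (rule inv_comp_integral[OF assms(1,2)])
  also have "contour_integral \<gamma> (\<lambda>u. 1/(inverse u - 0) / u^2) = contour_integral \<gamma> (\<lambda>u. 1/(u - 0))"
    using assms by (intro contour_integral_cong refl) (auto simp: field_simps power2_eq_square)
  finally have calc: "winding_number (inverse \<circ> \<gamma>) 0 = 1 / (2 * pi * \<i>) * - contour_integral \<gamma> (\<lambda>u. 1/(u - 0))" .
  have W0: "winding_number \<gamma> 0 = 1/(2*pi*\<i>) * contour_integral \<gamma> (\<lambda>u. 1/(u - 0))"
    by (rule winding_number_valid_path[OF assms(1,2)])
  show ?thesis by (simp only: calc W0 mult_minus_right)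
qed

lemma inversion_integral:
  fixes f :: "complex \<Rightarrow> complex"
  assumes vp: "valid_path \<gamma>" and cl: "pathfinish \<gamma> = pathstart \<gamma>" and fin: "finite pts" and z: "0 \<in> pts"
    and invp: "\<And>p. p \<in> pts \<Longrightarrow> inverse p \<in> pts"
    and avoid: "path_image \<gamma> \<inter> pts = {}"
    and wn: "\<And>p. p \<in> pts \<Longrightarrow> p \<noteq> 0 \<Longrightarrow> winding_number \<gamma> p + winding_number \<gamma> (inverse p) = 1"
    and wn0: "winding_number \<gamma> 0 = 1"
    and hol: "f holomorphic_on (- pts)"
  shows "contour_integral \<gamma> (\<lambda>u. f (inverse u) / u^2) = contour_integral \<gamma> f"
proof -
  have z': "0 \<notin> path_image \<gamma>" using avoid z by auto
  define \<gamma>' where "\<gamma>' = inverse \<circ> \<gamma>"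
  have vp': "valid_path \<gamma>'" and pi': "path_image \<gamma>' = inverse ` path_image \<gamma>"
    using inv_path[OF vp z'] \<gamma>'_def by auto
  have cl': "pathfinish \<gamma>' = pathstart \<gamma>'" using cl unfolding \<gamma>'_def pathfinish_def pathstart_def by simp
  have avoid': "path_image \<gamma>' \<inter> pts = {}"
  proof -
    { fix x assume "x \<in> path_image \<gamma>" "inverse x \<in> pts"
      then have "inverse (inverse x) \<in> pts" using invp by blast
      then have False using avoid \<open>x \<in> path_image \<gamma>\<close> by auto }
    then show ?thesis using pi' by auto
  qed
  have hol': "f holomorphic_on UNIV - pts" using hol by (simp add: Compl_eq_Diff_UNIV)
  have wn': "winding_number \<gamma>' p = - winding_number \<gamma> p" if "p \<in> pts" for p
  proof (cases "p = 0")
    case True then show ?thesis using inv_wind0[OF vp z'] wn0 \<gamma>'_def by simp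
  next
    case False
    have "inverse p \<notin> path_image \<gamma>" using invp[OF that] avoid by auto
    then have "winding_number \<gamma>' p = winding_number \<gamma> (inverse p) - 1"
      using inv_wind[OF vp z' False] wn0 \<gamma>'_def by simp
    moreover have "winding_number \<gamma> (inverse p) = 1 - winding_number \<gamma> p"
      using wn[OF that False] by (simp add: eq_diff_eq add.commute)
    ultimately show ?thesis by simp
  qed
  have R1: "contour_integral \<gamma> f = 2 * pi * \<i> * (\<Sum>p\<in>pts. winding_number \<gamma> p * residue f p)"
    using avoid by (intro Residue_theorem[OF open_UNIV connected_UNIV fin hol' vp cl]) auto
  have R2: "contour_integral \<gamma>' f = 2 * pi * \<i> * (\<Sum>p\<in>pts. winding_number \<gamma>' p * residue f p)"
    using avoid' by (intro Residue_theorem[OF open_UNIV connected_UNIV fin hol' vp' cl']) auto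
  have "contour_integral \<gamma>' f = - contour_integral \<gamma> f"
    unfolding R1 R2 by (simp add: wn' sum_negf)
  moreover have "contour_integral \<gamma>' f = - contour_integral \<gamma> (\<lambda>u. f (inverse u) / u^2)"
    unfolding \<gamma>'_def by (rule inv_comp_integral[OF vp z'])
  ultimately show ?thesis by simp
qed

lemma inv_holo:
  fixes f :: "complex \<Rightarrow> complex"
  assumes hol: "f holomorphic_on (- pts)" and z: "0 \<in> pts" and invp: "\<And>p. p \<in> pts \<Longrightarrow> inverse p \<in> pts"
  shows "(\<lambda>u. f (inverse u) / u^2) holomorphic_on (- pts)"
proof -
  have "(f \<circ> inverse) holomorphic_on (- pts)"
  proof (rule holomorphic_on_compose_gen[OF _ hol])
    show "inverse holomorphic_on - pts" using z by (intro holomorphic_intros) auto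
    show "inverse ` (- pts) \<subseteq> - pts" using invp by (metis ComplI image_subsetI inverse_inverse_eq subsetI Compl_iff)
  qed
  then show ?thesis using z by (auto intro!: holomorphic_intros simp: o_def)
qed

lemma sym_integral:
  fixes f g :: "complex \<Rightarrow> complex"
  assumes vp: "valid_path \<gamma>" and cl: "pathfinish \<gamma> = pathstart \<gamma>" and fin: "finite pts" and z: "0 \<in> pts"
    and invp: "\<And>p. p \<in> pts \<Longrightarrow> inverse p \<in> pts"
    and avoid: "path_image \<gamma> \<inter> pts = {}"
    and wn: "\<And>p. p \<in> pts \<Longrightarrow> p \<noteq> 0 \<Longrightarrow> winding_number \<gamma> p + winding_number \<gamma> (inverse p) = 1"
    and wn0: "winding_number \<gamma> 0 = 1"
    and hol: "f holomorphic_on (- pts)" and holg: "g holomorphic_on (- pts)"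
    and eq: "\<And>u. u \<in> path_image \<gamma> \<Longrightarrow> f u + f (inverse u) / u^2 = 2 * c * g u"
  shows "contour_integral \<gamma> f = c * contour_integral \<gamma> g"
proof -
  have op: "open (- pts)" using fin by (simp add: finite_imp_closed open_Compl)
  have ps: "path_image \<gamma> \<subseteq> - pts" using avoid by auto
  have i1: "f contour_integrable_on \<gamma>" by (rule contour_integrable_holomorphic_simple[OF hol op vp ps])
  have i2: "(\<lambda>u. f (inverse u) / u^2) contour_integrable_on \<gamma>"
    by (rule contour_integrable_holomorphic_simple[OF inv_holo[OF hol z invp] op vp ps])
  have i3: "g contour_integrable_on \<gamma>" by (rule contour_integrable_holomorphic_simple[OF holg op vp ps])
  have "2 * contour_integral \<gamma> f = contour_integral \<gamma> f + contour_integral \<gamma> (\<lambda>u. f (inverse u) / u^2)"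
    using inversion_integral[OF assms(1-9)] by simp
  also have "\<dots> = contour_integral \<gamma> (\<lambda>u. f u + f (inverse u) / u^2)"
    by (rule contour_integral_add[OF i1 i2, symmetric])
  also have "\<dots> = contour_integral \<gamma> (\<lambda>u. (2 * c) * g u)"
    using eq by (intro contour_integral_cong refl) auto
  also have "\<dots> = 2 * c * contour_integral \<gamma> g"
    by (rule contour_integral_lmul[OF i3])
  finally show ?thesis by simp
qed



lemma rinv: fixes u :: complex assumes "u \<noteq> 0" "1 + u^2 \<noteq> 0"
  shows "(1-(inverse u)^2)/(1+(inverse u)^2) = - ((1-u^2)/(1+u^2))"
proof -
  have a: "1 + (inverse u)^2 = (1 + u^2) / u^2" using assms by (simp add: field_simps)
  have b: "1 - (inverse u)^2 = - (1 - u^2) / u^2" using assms by (simp add: field_simps)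
  have c: "u^2 \<noteq> 0" using assms by simp
  show ?thesis unfolding a b using assms c by (simp add: divide_simps)
qed

lemma rpsi: fixes u :: complex assumes "u \<noteq> 0" "1 + u^2 \<noteq> 0"
  shows "(1-u^2)^2/(u*(1+u^2)) = ((1-u^2)/(1+u^2)) * ((1-u^2)/u)"
  using assms by (simp add: field_simps power2_eq_square)

lemma alg5: fixes u q s w2 G :: complex
  assumes "u \<noteq> 0" "1 + u^2 \<noteq> 0" "w2 \<noteq> 0" "q \<noteq> 0"
  shows "(1/u)*(1 - s*u)*(1 - q/(u*w2))*((1-u^2)/(1+u^2))*G
     + (1/inverse u)*(1 - s*inverse u)*(1 - q/(inverse u*w2))*((1-(inverse u)^2)/(1+(inverse u)^2))*G / u^2
     = 2 * (- (q / (2 * w2)) * (1 - s * w2 / q)) * ((1/u)*((1-u^2)^2/(u*(1+u^2)))*G)"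
  unfolding rinv[OF assms(1,2)] rpsi[OF assms(1,2)]
proof -
  define R where "R = (1-u^2)/(1+u^2)"
  show "(1/u)*(1 - s*u)*(1 - q/(u*w2))*R*G
     + (1/inverse u)*(1 - s*inverse u)*(1 - q/(inverse u*w2))*(-R)*G / u^2
     = 2 * (- (q / (2 * w2)) * (1 - s * w2 / q)) * ((1/u)*(R*((1-u^2)/u))*G)"
    using assms by (simp add: field_simps power2_eq_square)
qed

lemma alg6: fixes u q s w2 G :: complex
  assumes "u \<noteq> 0" "1 + u^2 \<noteq> 0" "w2 \<noteq> 0" "q \<noteq> 0"
  shows "(1/u)*u*(1 - q/(u*w2))*((1-u^2)/(1+u^2))*G
     + (1/inverse u)*inverse u*(1 - q/(inverse u*w2))*((1-(inverse u)^2)/(1+(inverse u)^2))*G / u^2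
     = 2 * (- (1/2)) * ((1/u)*((1-u^2)^2/(u*(1+u^2)))*G)"
  unfolding rinv[OF assms(1,2)] rpsi[OF assms(1,2)]
proof -
  define R where "R = (1-u^2)/(1+u^2)"
  show "(1/u)*u*(1 - q/(u*w2))*R*G
     + (1/inverse u)*inverse u*(1 - q/(inverse u*w2))*(-R)*G / u^2
     = 2 * (- (1/2)) * ((1/u)*(R*((1-u^2)/u))*G)"
    using assms by (simp add: field_simps power2_eq_square)
qed

lemma alg7: fixes u q s w2 G :: complex
  assumes "u \<noteq> 0" "1 + u^2 \<noteq> 0" "w2 \<noteq> 0" "q \<noteq> 0" "1 - s*u \<noteq> 0" "1 - s/u \<noteq> 0"
  shows "(1/u)*((1 - q/(u*w2))/(1 - s/u))*((1-u^2)/(1+u^2))*G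
     + (1/inverse u)*((1 - q/(inverse u*w2))/(1 - s/inverse u))*((1-(inverse u)^2)/(1+(inverse u)^2))*G / u^2
     = 2 * (- (q / (2 * w2)) * (1 - s * w2 / q)) * ((1/u)*((1-u^2)^2/(u*(1+u^2)))*(G/((1 - s*u)*(1 - s/u))))"
proof -
  define a where "a = 1 - s*u"
  define b where "b = 1 - s/u"
  have ab: "a \<noteq> 0" "b \<noteq> 0" using assms a_def b_def by auto
  have i1: "1 - s / inverse u = a" "1 - s * inverse u = b" unfolding a_def b_def by (simp_all add: divide_inverse)
  define G' where "G' = G/(a*b)"
  have G: "G = G' * (a*b)" using ab unfolding G'_def by simp
  have g1: "\<And>c X R. c*(X/b)*R*(G'*(a*b)) = c*a*X*R*G'" using ab by (simp add: field_simps)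
  have g2: "\<And>c X R d. c*(X/a)*R*(G'*(a*b))/d = c*b*X*R*G'/d" using ab by (simp add: field_simps)
  have e1: "(1/u)*((1 - q/(u*w2))/b)*((1-u^2)/(1+u^2))*G = (1/u)*a*(1 - q/(u*w2))*((1-u^2)/(1+u^2))*G'"
    unfolding G by (rule g1)
  have e2: "(1/inverse u)*((1 - q/(inverse u*w2))/a)*((1-(inverse u)^2)/(1+(inverse u)^2))*G / u^2
     = (1/inverse u)*b*(1 - q/(inverse u*w2))*((1-(inverse u)^2)/(1+(inverse u)^2))*G' / u^2"
    unfolding G by (rule g2)
  have "(1/u)*a*(1 - q/(u*w2))*((1-u^2)/(1+u^2))*G'
     + (1/inverse u)*b*(1 - q/(inverse u*w2))*((1-(inverse u)^2)/(1+(inverse u)^2))*G' / u^2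
     = 2 * (- (q / (2 * w2)) * (1 - s * w2 / q)) * ((1/u)*((1-u^2)^2/(u*(1+u^2)))*G')"
    using alg5[OF assms(1-4), of s G'] unfolding i1(2) a_def[symmetric] .
  then show ?thesis unfolding i1 b_def[symmetric] a_def[symmetric] e1 e2 G'_def[symmetric] .
qed

theorem mainTheorem3:
  fixes N j :: nat and q qh s w2 :: complex and \<gamma> :: "real \<Rightarrow> complex"
    and v :: fock and \<nu> :: monom
  assumes "1 \<le> N" and "1 \<le> j" and "j \<le> N"
    and "0 < norm q" and "norm q < 1" and "qh ^ 2 = q"
    and "w2 \<noteq> 0"
    and "valid_path \<gamma>" and "pathfinish \<gamma> = pathstart \<gamma>" and "simple_path \<gamma>"
    and "\<forall>p\<in>{0, s, \<i>, q * w2, q / w2}. p \<notin> path_image \<gamma> \<and> winding_number \<gamma> p = 1"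
    and "\<forall>p\<in>{- \<i>, w2 / q, inverse (q * w2)}. p \<notin> path_image \<gamma> \<and> winding_number \<gamma> p = 0"
    and "s \<noteq> 0 \<longrightarrow> inverse s \<notin> path_image \<gamma> \<and> winding_number \<gamma> (inverse s) = 0"
    and "fock_vec N v"
  shows
   "contour_integral \<gamma> (\<lambda>w1. (1 / w1) * (1 - s * w1) * (1 - q / (w1 * w2))
        * ((1 - w1 ^ 2) / (1 + w1 ^ 2)) * Hc N j q qh v \<nu> w1 w2)
      = - (q / (2 * w2)) * (1 - s * w2 / q) * contour_integral \<gamma> (\<lambda>w1. (1 / w1)
        * ((1 - w1 ^ 2) ^ 2 / (w1 * (1 + w1 ^ 2))) * Hc N j q qh v \<nu> w1 w2)
    \<and> contour_integral \<gamma> (\<lambda>w1. (1 / w1) * w1 * (1 - q / (w1 * w2))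
        * ((1 - w1 ^ 2) / (1 + w1 ^ 2)) * Hc N j q qh v \<nu> w1 w2)
      = - (1 / 2) * contour_integral \<gamma> (\<lambda>w1. (1 / w1)
        * ((1 - w1 ^ 2) ^ 2 / (w1 * (1 + w1 ^ 2))) * Hc N j q qh v \<nu> w1 w2)
    \<and> contour_integral \<gamma> (\<lambda>w1. (1 / w1) * ((1 - q / (w1 * w2)) / (1 - s / w1))
        * ((1 - w1 ^ 2) / (1 + w1 ^ 2)) * Hc N j q qh v \<nu> w1 w2)
      = - (q / (2 * w2)) * (1 - s * w2 / q) * contour_integral \<gamma> (\<lambda>w1. (1 / w1)
        * ((1 - w1 ^ 2) ^ 2 / (w1 * (1 + w1 ^ 2)))
        * (Hc N j q qh v \<nu> w1 w2 / ((1 - s * w1) * (1 - s / w1))))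
    \<and> contour_integral \<gamma> (\<lambda>w1. (1 / w1)
        * ((1 - w1 ^ 2) ^ 2 / (w1 * (1 + w1 ^ 2))) * Hc N j q qh v \<nu> w1 w2)
      = contour_integral \<gamma> (\<lambda>w1. (1 / w1)
        * ((1 - w1 ^ 2) ^ 2 / (w1 * (1 + w1 ^ 2))) * Hc N j q qh v \<nu> w1 (inverse w2))"
  proof -
  have q0: "q \<noteq> 0" using assms(4) by auto
  have w20: "w2 \<noteq> 0" by fact
  define Pts where "Pts = {0, s, \<i>, q*w2, q/w2, inverse s, -\<i>, w2/q, inverse (q*w2)}"
  have fin: "finite Pts" unfolding Pts_def by simp
  have z: "0 \<in> Pts" unfolding Pts_def by simp
  have invp: "\<And>p. p \<in> Pts \<Longrightarrow> inverse p \<in> Pts"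
    unfolding Pts_def by (auto simp: inverse_eq_divide)
  have A1: "\<forall>p\<in>{0, s, \<i>, q * w2, q / w2}. p \<notin> path_image \<gamma> \<and> winding_number \<gamma> p = 1" by fact
  have A2: "\<forall>p\<in>{- \<i>, w2 / q, inverse (q * w2)}. p \<notin> path_image \<gamma> \<and> winding_number \<gamma> p = 0" by fact
  have A3: "s \<noteq> 0 \<longrightarrow> inverse s \<notin> path_image \<gamma> \<and> winding_number \<gamma> (inverse s) = 0" by fact
  have avoid: "path_image \<gamma> \<inter> Pts = {}"
    using A1 A2 A3 unfolding Pts_def by (cases "s = 0") auto
  have wn0: "winding_number \<gamma> 0 = 1" using A1 by auto
  have ii: "inverse \<i> = - \<i>" "inverse (- \<i>) = \<i>" by (simp_all add: inverse_eq_divide)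
  have wn: "winding_number \<gamma> p + winding_number \<gamma> (inverse p) = 1" if "p \<in> Pts" "p \<noteq> 0" for p
  proof -
    have e1: "inverse (q * w2) = inverse (q*w2)" ..
    have e2: "inverse (q / w2) = w2 / q" "inverse (w2 / q) = q / w2" by (simp_all add: inverse_eq_divide)
    show ?thesis using that A1 A2 A3 ii e2 unfolding Pts_def by auto
  qed
  have nz: "u \<noteq> 0 \<and> 1 + u^2 \<noteq> 0 \<and> Dfun q u w2 \<noteq> 0 \<and> 1 - s*u \<noteq> 0 \<and> 1 - s/u \<noteq> 0" if u: "u \<notin> Pts" for u
  proof (intro conjI)
    show u0: "u \<noteq> 0" using u z by auto
    show "1 + u^2 \<noteq> 0"
    proof
      assume "1 + u^2 = 0"
      then have "(u - \<i>) * (u + \<i>) = 0" by (simp add: algebra_simps power2_eq_square)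
      then have "u - \<i> = 0 \<or> u + \<i> = 0" by simp
      then have "u = \<i> \<or> u = - \<i>" by (metis eq_neg_iff_add_eq_0 right_minus_eq)
      then show False using u unfolding Pts_def by auto
    qed
    have f1: "1 - q*u*w2 \<noteq> 0"
    proof
      assume "1 - q*u*w2 = 0"
      then have "u = inverse (q*w2)" using q0 w20 by (simp add: field_simps)
      then show False using u unfolding Pts_def by auto
    qed
    have f2: "1 - q*w2/u \<noteq> 0"
    proof
      assume "1 - q*w2/u = 0"
      then have "u = q*w2" using u0 by (simp add: field_simps)
      then show False using u unfolding Pts_def by auto
    qed
    have f3: "1 - q*u/w2 \<noteq> 0"
    proof
      assume "1 - q*u/w2 = 0"
      then have "u = w2/q" using q0 w20 by (simp add: field_simps)
      then show False using u unfolding Pts_def by auto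
    qed
    have f4: "1 - q/(u*w2) \<noteq> 0"
    proof
      assume "1 - q/(u*w2) = 0"
      then have "u = q/w2" using u0 w20 by (simp add: field_simps)
      then show False using u unfolding Pts_def by auto
    qed
    show "Dfun q u w2 \<noteq> 0" unfolding Dfun_def using f1 f2 f3 f4 by simp
    show "1 - s*u \<noteq> 0"
    proof
      assume "1 - s*u = 0"
      then have su: "s * u = 1" by simp
      then have "s \<noteq> 0" by auto
      moreover from su this have "u = inverse s" by (metis inverse_unique mult.commute)
      ultimately show False using u unfolding Pts_def by auto
    qed
    show "1 - s/u \<noteq> 0"
    proof
      assume "1 - s/u = 0"
      then have "u = s" using u0 by (simp add: field_simps)
      then show False using u unfolding Pts_def by auto
    qed
  qed
  have holD: "(\<lambda>w. Dfun q w w2) holomorphic_on -Pts"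
    unfolding Dfun_def using nz w20 by (intro holomorphic_intros) auto
  have holO: "(\<lambda>w. op_exp q (betaH N j q qh w) v \<nu>) holomorphic_on -Pts"
    by (rule holomorphic_on_subset[OF opexp_holo[OF assms(14) q0]]) (use z in auto)
  have holG: "(\<lambda>w. Hc N j q qh v \<nu> w w2) holomorphic_on -Pts"
    unfolding Hc_def using nz by (intro holomorphic_intros holD holO) auto
  have vp: "valid_path \<gamma>" and cl: "pathfinish \<gamma> = pathstart \<gamma>" by fact+
  note SI = sym_integral[OF vp cl fin z invp avoid wn wn0]
  have pi: "u \<notin> Pts" if "u \<in> path_image \<gamma>" for u using avoid that by auto
  let ?c = "- (q / (2 * w2)) * (1 - s * w2 / q)"
  have I5: "contour_integral \<gamma> (\<lambda>w1. (1 / w1) * (1 - s * w1) * (1 - q / (w1 * w2))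
        * ((1 - w1 ^ 2) / (1 + w1 ^ 2)) * Hc N j q qh v \<nu> w1 w2)
      = ?c * contour_integral \<gamma> (\<lambda>w1. (1 / w1)
        * ((1 - w1 ^ 2) ^ 2 / (w1 * (1 + w1 ^ 2))) * Hc N j q qh v \<nu> w1 w2)"
  proof (rule SI)
    show "(\<lambda>w1. (1 / w1) * (1 - s * w1) * (1 - q / (w1 * w2))
        * ((1 - w1 ^ 2) / (1 + w1 ^ 2)) * Hc N j q qh v \<nu> w1 w2) holomorphic_on - Pts"
      using nz by (intro holomorphic_intros holG) auto
    show "(\<lambda>w1. (1 / w1) * ((1 - w1 ^ 2) ^ 2 / (w1 * (1 + w1 ^ 2))) * Hc N j q qh v \<nu> w1 w2) holomorphic_on - Pts"
      using nz by (intro holomorphic_intros holG) auto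
    fix u assume "u \<in> path_image \<gamma>"
    then have "u \<notin> Pts" by (rule pi)
    from nz[OF this] show "(1 / u) * (1 - s * u) * (1 - q / (u * w2))
        * ((1 - u ^ 2) / (1 + u ^ 2)) * Hc N j q qh v \<nu> u w2 + 
        (1 / inverse u) * (1 - s * inverse u) * (1 - q / (inverse u * w2))
        * ((1 - (inverse u) ^ 2) / (1 + (inverse u) ^ 2)) * Hc N j q qh v \<nu> (inverse u) w2 / u^2
      = 2 * ?c * ((1 / u) * ((1 - u ^ 2) ^ 2 / (u * (1 + u ^ 2))) * Hc N j q qh v \<nu> u w2)"
      unfolding Hc_inv1 using alg5[OF _ _ w20 q0] by blast
  qed
  have I6: "contour_integral \<gamma> (\<lambda>w1. (1 / w1) * w1 * (1 - q / (w1 * w2))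
        * ((1 - w1 ^ 2) / (1 + w1 ^ 2)) * Hc N j q qh v \<nu> w1 w2)
      = - (1 / 2) * contour_integral \<gamma> (\<lambda>w1. (1 / w1)
        * ((1 - w1 ^ 2) ^ 2 / (w1 * (1 + w1 ^ 2))) * Hc N j q qh v \<nu> w1 w2)"
  proof (rule SI)
    show "(\<lambda>w1. (1 / w1) * w1 * (1 - q / (w1 * w2))
        * ((1 - w1 ^ 2) / (1 + w1 ^ 2)) * Hc N j q qh v \<nu> w1 w2) holomorphic_on - Pts"
      using nz by (intro holomorphic_intros holG) auto
    show "(\<lambda>w1. (1 / w1) * ((1 - w1 ^ 2) ^ 2 / (w1 * (1 + w1 ^ 2))) * Hc N j q qh v \<nu> w1 w2) holomorphic_on - Pts"
      using nz by (intro holomorphic_intros holG) auto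
    fix u assume "u \<in> path_image \<gamma>"
    then have "u \<notin> Pts" by (rule pi)
    from nz[OF this] show "(1 / u) * u * (1 - q / (u * w2))
        * ((1 - u ^ 2) / (1 + u ^ 2)) * Hc N j q qh v \<nu> u w2 + 
        (1 / inverse u) * inverse u * (1 - q / (inverse u * w2))
        * ((1 - (inverse u) ^ 2) / (1 + (inverse u) ^ 2)) * Hc N j q qh v \<nu> (inverse u) w2 / u^2
      = 2 * (- (1 / 2)) * ((1 / u) * ((1 - u ^ 2) ^ 2 / (u * (1 + u ^ 2))) * Hc N j q qh v \<nu> u w2)"
      unfolding Hc_inv1 using alg6[OF _ _ w20 q0] by blast
  qed
  have I7: "contour_integral \<gamma> (\<lambda>w1. (1 / w1) * ((1 - q / (w1 * w2)) / (1 - s / w1))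
        * ((1 - w1 ^ 2) / (1 + w1 ^ 2)) * Hc N j q qh v \<nu> w1 w2)
      = ?c * contour_integral \<gamma> (\<lambda>w1. (1 / w1)
        * ((1 - w1 ^ 2) ^ 2 / (w1 * (1 + w1 ^ 2)))
        * (Hc N j q qh v \<nu> w1 w2 / ((1 - s * w1) * (1 - s / w1))))"
  proof (rule SI)
    show "(\<lambda>w1. (1 / w1) * ((1 - q / (w1 * w2)) / (1 - s / w1))
        * ((1 - w1 ^ 2) / (1 + w1 ^ 2)) * Hc N j q qh v \<nu> w1 w2) holomorphic_on - Pts"
      using nz by (intro holomorphic_intros holG) auto
    show "(\<lambda>w1. (1 / w1) * ((1 - w1 ^ 2) ^ 2 / (w1 * (1 + w1 ^ 2)))
        * (Hc N j q qh v \<nu> w1 w2 / ((1 - s * w1) * (1 - s / w1)))) holomorphic_on - Pts"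
      using nz by (intro holomorphic_intros holG) auto
    fix u assume "u \<in> path_image \<gamma>"
    then have "u \<notin> Pts" by (rule pi)
    from nz[OF this] show "(1 / u) * ((1 - q / (u * w2)) / (1 - s / u))
        * ((1 - u ^ 2) / (1 + u ^ 2)) * Hc N j q qh v \<nu> u w2 + 
        (1 / inverse u) * ((1 - q / (inverse u * w2)) / (1 - s / inverse u))
        * ((1 - (inverse u) ^ 2) / (1 + (inverse u) ^ 2)) * Hc N j q qh v \<nu> (inverse u) w2 / u^2
      = 2 * ?c * ((1 / u) * ((1 - u ^ 2) ^ 2 / (u * (1 + u ^ 2)))
        * (Hc N j q qh v \<nu> u w2 / ((1 - s * u) * (1 - s / u))))"
      unfolding Hc_inv1 using alg7[OF _ _ w20 q0] by blast
  qed
  have I8: "contour_integral \<gamma> (\<lambda>w1. (1 / w1)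
        * ((1 - w1 ^ 2) ^ 2 / (w1 * (1 + w1 ^ 2))) * Hc N j q qh v \<nu> w1 w2)
      = contour_integral \<gamma> (\<lambda>w1. (1 / w1)
        * ((1 - w1 ^ 2) ^ 2 / (w1 * (1 + w1 ^ 2))) * Hc N j q qh v \<nu> w1 (inverse w2))"
    unfolding Hc_inv2 ..
  show ?thesis using I5 I6 I7 I8 by blast
qed

end
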